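(* For every ranking $R\in\mathcal{R}$ there exists a matrix $W\in\mathbb{R}^{m\times n}_{\ge0}$ such that for every ranking $R'\in\mathcal{R}$ with $R'\ne R$, $\langle R',W\rangle\le\langle R,W\rangle\cdot(1-\frac1n)$.
   Context: $\mathcal{R}$ is the set of rankings: matrices $R\in\{0,1\}^{m\times n}$ with $\sum_{j=1}^n R_{ij}\le 1$ for every item $i\in[m]$ and $\sum_{i=1}^m R_{ij}=1$ for every position $j\in[n]$; $\langle R,W\rangle=\sum_{i,j}R_{ij}W_{ij}$. *)

theory Defs
  imports "HOL-Analysis.Analysis"
begin

text \<open>Matrices in R^{m x n} are rendered as real^'n^'m (rows indexed by the finite
type 'm of items, columns by the finite type 'n of positions).\<close>

definition rankings :: "(real^'n::finite^'m::finite) set" where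
  "rankings = {R. (\<forall>i j. R$i$j \<in> {0, 1}) \<and>
                  (\<forall>i. (\<Sum>j\<in>UNIV. R$i$j) \<le> 1) \<and>
                  (\<forall>j. (\<Sum>i\<in>UNIV. R$i$j) = 1)}"

definition mat_inner :: "real^'n::finite^'m::finite \<Rightarrow> real^'n^'m \<Rightarrow> real" where
  "mat_inner R W = (\<Sum>i\<in>UNIV. \<Sum>j\<in>UNIV. R$i$j * W$i$j)"

end

theory Submission
  imports Defs
begin

lemma col_le1:
  fixes R R' :: "real^'n::finite^'m::finite"
  assumes "R \<in> rankings" "R' \<in> rankings"
  shows "(\<Sum>i\<in>UNIV. R'$i$j * R$i$j) \<le> 1"
proof -
  have "(\<Sum>i\<in>UNIV. R'$i$j * R$i$j) \<le> (\<Sum>i\<in>UNIV. R$i$j)"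
  proof (rule sum_mono)
    fix i
    have "R'$i$j \<in> {0,1}" "R$i$j \<in> {0,1}" using assms unfolding rankings_def by auto
    then show "R'$i$j * R$i$j \<le> R$i$j" by auto
  qed
  also have "\<dots> = 1" using assms unfolding rankings_def by auto
  finally show ?thesis .
qed

lemma col_zero:
  fixes R R' :: "real^'n::finite^'m::finite"
  assumes "R \<in> rankings" "R' \<in> rankings" "R'$i0$j \<noteq> R$i0$j"
  shows "(\<Sum>i\<in>UNIV. R'$i$j * R$i$j) = 0"
proof (rule ccontr)
  assume ne: "(\<Sum>i\<in>UNIV. R'$i$j * R$i$j) \<noteq> 0"
  have b: "\<And>i. R'$i$j \<in> {0,1} \<and> R$i$j \<in> {0,1}" using assms unfolding rankings_def by auto
  have nR: "\<And>i. R$i$j \<ge> 0" "\<And>i. R'$i$j \<ge> 0"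
  proof -
    fix i show "R$i$j \<ge> 0" using b[of i] by auto
  next
    fix i show "R'$i$j \<ge> 0" using b[of i] by auto
  qed
  have nn: "\<And>i. R'$i$j * R$i$j \<ge> 0"
  proof -
    fix i show "R'$i$j * R$i$j \<ge> 0" using b[of i] by auto
  qed
  then obtain k where k: "R'$k$j * R$k$j \<noteq> 0" using ne by (meson sum.neutral)
  then have "R'$k$j = 1" "R$k$j = 1" using b[of k] by auto
  have s1: "(\<Sum>i\<in>UNIV. R$i$j) = 1" "(\<Sum>i\<in>UNIV. R'$i$j) = 1"
    using assms unfolding rankings_def by auto
  have "\<And>i. i \<noteq> k \<Longrightarrow> R$i$j = 0"
  proof -
    fix i assume "i \<noteq> k"
    have "(\<Sum>i\<in>UNIV. R$i$j) = R$k$j + (\<Sum>i\<in>UNIV-{k}. R$i$j)"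
      by (simp add: sum.remove)
    moreover have "R$i$j \<le> (\<Sum>i\<in>UNIV-{k}. R$i$j)"
      using \<open>i \<noteq> k\<close> nR by (intro member_le_sum) auto
    ultimately show "R$i$j = 0" using s1 \<open>R$k$j = 1\<close> b[of i] by auto
  qed
  moreover have "\<And>i. i \<noteq> k \<Longrightarrow> R'$i$j = 0"
  proof -
    fix i assume "i \<noteq> k"
    have "(\<Sum>i\<in>UNIV. R'$i$j) = R'$k$j + (\<Sum>i\<in>UNIV-{k}. R'$i$j)"
      by (simp add: sum.remove)
    moreover have "R'$i$j \<le> (\<Sum>i\<in>UNIV-{k}. R'$i$j)"
      using \<open>i \<noteq> k\<close> nR by (intro member_le_sum) auto
    ultimately show "R'$i$j = 0" using s1 \<open>R'$k$j = 1\<close> b[of i] by auto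
  qed
  ultimately show False using assms(3) \<open>R'$k$j = 1\<close> \<open>R$k$j = 1\<close>
    by (cases "i0 = k") auto
qed

theorem lemma7p3:
  fixes R :: "real^'n::finite^'m::finite"
  assumes "R \<in> rankings"
  shows "\<exists>W :: real^'n^'m. (\<forall>i j. W$i$j \<ge> 0) \<and>
           (\<forall>R' \<in> rankings. R' \<noteq> R \<longrightarrow>
              mat_inner R' W \<le> mat_inner R W * (1 - 1 / real CARD('n)))"
proof (intro exI conjI allI ballI impI)
  have b: "\<And>i j. R$i$j \<in> {0,1}" using assms unfolding rankings_def by auto
  show "R$i$j \<ge> 0" for i j using b[of i j] by auto
  have RR: "mat_inner R R = real CARD('n)"
  proof -
    have "mat_inner R R = (\<Sum>i\<in>UNIV. \<Sum>j\<in>UNIV. R$i$j)"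
      unfolding mat_inner_def using b by (intro sum.cong refl) force
    also have "\<dots> = (\<Sum>j\<in>UNIV. \<Sum>i\<in>UNIV. R$i$j)" by (rule sum.swap)
    also have "\<dots> = (\<Sum>j\<in>(UNIV::'n set). 1)" using assms unfolding rankings_def by auto
    finally show ?thesis by simp
  qed
  fix R' :: "real^'n^'m" assume R': "R' \<in> rankings" "R' \<noteq> R"
  then obtain i0 j0 where ne: "R'$i0$j0 \<noteq> R$i0$j0" by (metis vec_eq_iff)
  have "mat_inner R' R = (\<Sum>j\<in>UNIV. \<Sum>i\<in>UNIV. R'$i$j * R$i$j)"
    unfolding mat_inner_def by (rule sum.swap)
  also have "\<dots> = (\<Sum>i\<in>UNIV. R'$i$j0 * R$i$j0) + (\<Sum>j\<in>UNIV-{j0}. \<Sum>i\<in>UNIV. R'$i$j * R$i$j)"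
    by (rule sum.remove) auto
  also have "\<dots> \<le> 0 + (\<Sum>j\<in>UNIV-{j0}. 1)"
    using col_zero[OF assms R'(1) ne] col_le1[OF assms R'(1)]
    by (intro add_mono sum_mono) auto
  also have "\<dots> = real CARD('n) - 1"
    by (simp add: card_Diff_singleton)
  also have "\<dots> = mat_inner R R * (1 - 1 / real CARD('n))"
    using RR by (simp add: field_simps)
  finally show "mat_inner R' R \<le> mat_inner R R * (1 - 1 / real CARD('n))" .
qed

end
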